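(* Let $A=\{a_1,\dots,a_k\}$ be a finite set of options and let $u_1,u_2:A\to\mathbb{R}$ be arbitrary. In the two-player Price \& Choose game defined in the context, (i) every subgame-perfect Nash equilibrium $\sigma=(\sigma_1,\sigma_2)$ has an efficient outcome, i.e. $\sigma_2(\sigma_1)\in\arg\max_{a\in A}\,(u_1(a)+u_2(a))$; and (ii) for every efficient option $a\in A$ there exists a subgame-perfect Nash equilibrium $\sigma$ with $\sigma_2(\sigma_1)=a$. (In particular, a subgame-perfect Nash equilibrium exists.)
   Context: Two players with quasi-linear utilities: if option $a\in A$ is selected and player $i$ receives monetary transfer $t_i$, player $i$'s utility is $u_i(a)+t_i$. Let $P=\{p\in\mathbb{R}^k:\sum_{j=1}^k p_j=0\}$. The Price \& Choose (P\&C) game: first player 1 chooses a price vector $p\in P$; then player 2, having observed $p$, chooses an option $a_j\in A$ and pays $p_j$ to player 1. Payoffs are $g_1(p,a_j)=u_1(a_j)+p_j$ and $g_2(p,a_j)=u_2(a_j)-p_j$. A (pure) strategy profile is $\sigma=(\sigma_1,\sigma_2)$ with $\sigma_1\in P$ and $\sigma_2:P\to A$. It is a subgame-perfect Nash equilibrium if for every $p\in P$, $\sigma_2(p)\in\arg\max_{a\in A}g_2(p,a)$, and $g_1(\sigma_1,\sigma_2(\sigma_1))\ge g_1(p,\sigma_2(p))$ for all $p\in P$. Its outcome is $\sigma_2(\sigma_1)$. An option $a$ is efficient if $u_1(a)+u_2(a)=\max_{b\in A}(u_1(b)+u_2(b))$. *)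

theory Defs
  imports Complex_Main
begin

text \<open>Options form a finite type 'a (A = UNIV). A price vector is a function p :: 'a => real
  indexed by options; P = price vectors summing to zero.\<close>

definition price_vectors :: "('a::finite \<Rightarrow> real) set" where
  "price_vectors = {p. (\<Sum>a\<in>UNIV. p a) = 0}"

definition g1 :: "('a \<Rightarrow> real) \<Rightarrow> ('a \<Rightarrow> real) \<Rightarrow> 'a \<Rightarrow> real" where
  "g1 u1 p a = u1 a + p a"

definition g2 :: "('a \<Rightarrow> real) \<Rightarrow> ('a \<Rightarrow> real) \<Rightarrow> 'a \<Rightarrow> real" where
  "g2 u2 p a = u2 a - p a"

definition is_SPNE ::
  "('a::finite \<Rightarrow> real) \<Rightarrow> ('a \<Rightarrow> real) \<Rightarrow> ('a \<Rightarrow> real) \<Rightarrow> (('a \<Rightarrow> real) \<Rightarrow> 'a) \<Rightarrow> bool" where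
  "is_SPNE u1 u2 s1 s2 \<longleftrightarrow>
     s1 \<in> price_vectors \<and>
     (\<forall>p\<in>price_vectors. \<forall>b. g2 u2 p (s2 p) \<ge> g2 u2 p b) \<and>
     (\<forall>p\<in>price_vectors. g1 u1 s1 (s2 s1) \<ge> g1 u1 p (s2 p))"

definition efficient :: "('a \<Rightarrow> real) \<Rightarrow> ('a \<Rightarrow> real) \<Rightarrow> 'a \<Rightarrow> bool" where
  "efficient u1 u2 a \<longleftrightarrow> (\<forall>b. u1 b + u2 b \<le> u1 a + u2 a)"

end

theory Submission
  imports Defs
begin

lemma avg_le_ex:
  fixes f :: "'a::finite \<Rightarrow> real"
  shows "\<exists>c. f c \<ge> (\<Sum>x\<in>UNIV. f x) / real (card (UNIV::'a set))"
proof (rule ccontr)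
  assume "\<not> ?thesis"
  hence h: "\<And>c. f c < (\<Sum>x\<in>UNIV. f x) / real (card (UNIV::'a set))" by (meson not_le)
  have "(\<Sum>x\<in>UNIV. f x) < (\<Sum>x\<in>(UNIV::'a set). (\<Sum>x\<in>UNIV. f x) / real (card (UNIV::'a set)))"
    by (rule sum_strict_mono) (auto simp: h)
  also have "\<dots> = (\<Sum>x\<in>UNIV. f x)" by simp
  finally show False by simp
qed

lemma ex_argmax:
  fixes f :: "'a::finite \<Rightarrow> real"
  shows "\<exists>c. \<forall>b. f b \<le> f c"
proof -
  have "Max (range f) \<in> range f" by (rule Max_in) auto
  then obtain c where "f c = Max (range f)" by (metis imageE)
  thus ?thesis by (metis Max_ge finite_UNIV finite_imageI rangeI)
qed

lemma g2_sum:
  fixes p :: "'a::finite \<Rightarrow> real"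
  assumes "p \<in> price_vectors"
  shows "(\<Sum>x\<in>UNIV. g2 u2 p x) = (\<Sum>x\<in>UNIV. u2 x)"
  using assms by (simp add: g2_def price_vectors_def sum_subtractf)

theorem proposition1:
  fixes u1 u2 :: "'a::finite \<Rightarrow> real"
  shows "(\<forall>s1 s2. is_SPNE u1 u2 s1 s2 \<longrightarrow> efficient u1 u2 (s2 s1))
       \<and> (\<forall>a. efficient u1 u2 a \<longrightarrow> (\<exists>s1 s2. is_SPNE u1 u2 s1 s2 \<and> s2 s1 = a))"
proof
  define S where "S = (\<Sum>x\<in>UNIV. u2 x)"
  define n where "n = real (card (UNIV::'a set))"
  have npos: "n > 0" unfolding n_def by (simp add: finite_UNIV_card_ge_0)
  have best: "\<exists>c. g2 u2 p c \<ge> S / n" if "p \<in> price_vectors" for p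
    using avg_le_ex[of "g2 u2 p"] g2_sum[OF that, of u2] unfolding S_def n_def by metis
  show "\<forall>s1 s2. is_SPNE u1 u2 s1 s2 \<longrightarrow> efficient u1 u2 (s2 s1)"
  proof (intro allI impI)
    fix s1 s2 assume sp: "is_SPNE u1 u2 s1 s2"
    let ?a = "s2 s1"
    have s1P: "s1 \<in> price_vectors" using sp by (simp add: is_SPNE_def)
    obtain c where c: "g2 u2 s1 c \<ge> S / n" using best[OF s1P] by blast
    have "g2 u2 s1 ?a \<ge> g2 u2 s1 c" using sp s1P by (simp add: is_SPNE_def)
    hence A: "u1 ?a + s1 ?a \<le> u1 ?a + u2 ?a - S / n" using c by (simp add: g2_def)
    show "efficient u1 u2 ?a"
      unfolding efficient_def
    proof (rule ccontr)
      assume "\<not> (\<forall>b. u1 b + u2 b \<le> u1 ?a + u2 ?a)"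
      then obtain b where b: "u1 b + u2 b > u1 ?a + u2 ?a" using not_le by blast
      define d where "d = (u1 b + u2 b) - (u1 ?a + u2 ?a)"
      have dpos: "d > 0" using b d_def by simp
      define e where "e = d / 2"
      define V where "V = (S + (n - 1) * e) / n"
      define v where "v = (\<lambda>x. if x = b then V else V - e)"
      define p where "p = (\<lambda>x. u2 x - v x)"
      have sumv: "(\<Sum>x\<in>UNIV. v x) = S"
      proof -
        have "(\<Sum>x\<in>UNIV. v x) = (\<Sum>x\<in>UNIV. V - (if x = b then 0 else e))"
          by (rule sum.cong) (auto simp: v_def)
        also have "\<dots> = n * V - (\<Sum>x\<in>UNIV. (if x = b then 0 else e))"
          by (simp add: sum_subtractf n_def)
        also have "(\<Sum>x\<in>UNIV. (if x = b then 0 else e)) = (\<Sum>x\<in>UNIV - {b}. e)"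
          by (simp add: sum.If_cases Diff_eq Compl_eq)
        also have "\<dots> = (n - 1) * e" using finite_UNIV_card_ge_0[where ?'a='a] by (simp add: n_def card_Diff_singleton of_nat_diff Suc_le_eq)
        finally show ?thesis using npos unfolding V_def by (simp add: field_simps)
      qed
      have pP: "p \<in> price_vectors"
        using sumv by (simp add: price_vectors_def p_def sum_subtractf S_def)
      have "\<forall>x. g2 u2 p (s2 p) \<ge> g2 u2 p x" using sp pP by (simp add: is_SPNE_def)
      hence "g2 u2 p (s2 p) \<ge> g2 u2 p b" by blast
      hence "s2 p = b"
        using dpos by (auto simp: g2_def p_def v_def e_def split: if_splits)
      have "g1 u1 s1 ?a \<ge> g1 u1 p (s2 p)" using sp pP by (simp add: is_SPNE_def)
      hence "u1 ?a + s1 ?a \<ge> u1 b + u2 b - V"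
        using \<open>s2 p = b\<close> by (simp add: g1_def p_def v_def)
      moreover have "V = S / n + (n - 1) / n * e" using npos unfolding V_def by (simp add: field_simps)
      moreover have "(n - 1) / n * e < d"
      proof -
        have "(n - 1) / n \<le> 1" using npos by simp
        moreover have "e > 0" using dpos e_def by simp
        ultimately have "(n - 1) / n * e \<le> 1 * e" by (intro mult_right_mono) auto
        hence "(n - 1) / n * e \<le> e" by simp
        moreover have "e < d" using dpos e_def by simp
        ultimately show ?thesis by linarith
      qed
      ultimately show False using A d_def by linarith
    qed
  qed
  show "\<forall>a. efficient u1 u2 a \<longrightarrow> (\<exists>s1 s2. is_SPNE u1 u2 s1 s2 \<and> s2 s1 = a)"
  proof (intro allI impI)
    fix a assume eff: "efficient u1 u2 a"
    define s1 where "s1 = (\<lambda>x. u2 x - S / n)"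
    define s2 where "s2 = (\<lambda>p. if p = s1 then a else (SOME c. \<forall>b. g2 u2 p b \<le> g2 u2 p c))"
    have s1P: "s1 \<in> price_vectors"
      using npos by (simp add: price_vectors_def s1_def sum_subtractf S_def n_def)
    have br: "\<forall>b. g2 u2 p (s2 p) \<ge> g2 u2 p b" for p
    proof (cases "p = s1")
      case True thus ?thesis by (simp add: s2_def g2_def s1_def)
    next
      case False
      thus ?thesis using someI_ex[OF ex_argmax[of "g2 u2 p"]] by (simp add: s2_def)
    qed
    have "g1 u1 s1 (s2 s1) \<ge> g1 u1 p (s2 p)" if pP: "p \<in> price_vectors" for p
    proof -
      obtain c where c: "g2 u2 p c \<ge> S / n" using best[OF pP] by blast
      have "g2 u2 p (s2 p) \<ge> S / n" using c br[of p] by (meson order_trans)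
      moreover have "u1 (s2 p) + u2 (s2 p) \<le> u1 a + u2 a" using eff by (simp add: efficient_def)
      ultimately show ?thesis by (simp add: g1_def g2_def s2_def s1_def)
    qed
    hence "is_SPNE u1 u2 s1 s2" using s1P br by (simp add: is_SPNE_def)
    thus "\<exists>s1 s2. is_SPNE u1 u2 s1 s2 \<and> s2 s1 = a" by (intro exI[of _ s1] exI[of _ s2]) (simp add: s2_def)
  qed
qed

end
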